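(* Let $I\subset\mathbb{R}$ be an open interval and let $f:I\to\mathbb{R}$ be a strictly convex function of class $C^{3}$ (i.e. $f''>0$ on $I$), with graph $X$. Then $f$ is a quadratic polynomial if and only if $X$ satisfies the following Condition (A): there is a positive constant $a$, depending only on $X$, such that for every point $P$ on $X$ and every chord $AB$ of $X$ parallel to the tangent line of $X$ at $P$, if $V$ denotes the point where the line through $P$ parallel to the $y$-axis meets the segment $AB$, then the area of the region bounded by $X$ and the chord $AB$ equals $a\,|PV|^{3/2}$.
   Context: A chord $AB$ of $X$ is a segment joining two points $A,B$ of $X$; the "region bounded by $X$ and $AB$" is the region enclosed by the arc of $X$ between $A$ and $B$ and the segment $AB$. $|PV|$ denotes the Euclidean length of the segment $PV$. *)

theory Defs
  imports "HOL-Analysis.Analysis"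
begin

definition C3_with_derivs ::
  "(real \<Rightarrow> real) \<Rightarrow> (real \<Rightarrow> real) \<Rightarrow> (real \<Rightarrow> real) \<Rightarrow> (real \<Rightarrow> real) \<Rightarrow> real set \<Rightarrow> bool" where
  "C3_with_derivs f f1 f2 f3 I \<longleftrightarrow>
     (\<forall>x\<in>I. (f has_real_derivative f1 x) (at x)
           \<and> (f1 has_real_derivative f2 x) (at x)
           \<and> (f2 has_real_derivative f3 x) (at x))
     \<and> continuous_on I f3"

definition chord :: "(real \<Rightarrow> real) \<Rightarrow> real \<Rightarrow> real \<Rightarrow> real \<Rightarrow> real" where
  "chord f s t x = f s + (f t - f s) / (t - s) * (x - s)"

text \<open>Region enclosed by the arc of the graph of f between s and t and the chord
  (for convex f the chord lies above the arc).\<close>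
definition chord_region :: "(real \<Rightarrow> real) \<Rightarrow> real \<Rightarrow> real \<Rightarrow> (real \<times> real) set" where
  "chord_region f s t = {(x, y). s \<le> x \<and> x \<le> t \<and> f x \<le> y \<and> y \<le> chord f s t x}"

definition condition_A :: "(real \<Rightarrow> real) \<Rightarrow> (real \<Rightarrow> real) \<Rightarrow> real set \<Rightarrow> bool" where
  "condition_A f f1 I \<longleftrightarrow>
    (\<exists>a>0. \<forall>p\<in>I. \<forall>s\<in>I. \<forall>t\<in>I.
       s < t \<and> (f t - f s) / (t - s) = f1 p \<and> s \<le> p \<and> p \<le> t \<longrightarrow>
       measure lebesgue (chord_region f s t) = a * \<bar>chord f s t p - f p\<bar> powr (3/2))"

end

theory Submission imports Defs begin

lemma region_measure:
 fixes u v :: "real \<Rightarrow> real"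
 assumes st: "s \<le> t" and cu: "continuous_on UNIV u" and cv: "continuous_on UNIV v"
   and le: "\<forall>x\<in>{s..t}. u x \<le> v x"
 shows "measure lebesgue {(x,y). s \<le> x \<and> x \<le> t \<and> u x \<le> y \<and> y \<le> v x} = integral {s..t} (\<lambda>x. v x - u x)"
proof -
  let ?R = "{(x,y). s \<le> x \<and> x \<le> t \<and> u x \<le> y \<and> y \<le> v x}"
  have [measurable]: "u \<in> borel_measurable borel" "v \<in> borel_measurable borel"
    using cu cv by (auto intro: borel_measurable_continuous_onI)
  have "closed ?R"
  proof -
    have "?R = {z. s \<le> fst z} \<inter> {z. fst z \<le> t} \<inter> {z. u (fst z) \<le> snd z} \<inter> {z. snd z \<le> v (fst z)}" by auto
    moreover have "closed \<dots>"
      by (intro closed_Int closed_Collect_le continuous_intros continuous_on_compose2[OF cu] continuous_on_compose2[OF cv]) auto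
    ultimately show ?thesis by simp
  qed
  then have R2: "?R \<in> sets lborel" by simp
  have R: "?R \<in> sets (lborel \<Otimes>\<^sub>M lborel)" using R2 by (simp only: lborel_prod)
  define g where "g x = indicator {s..t} x * (v x - u x)" for x
  have [measurable]: "g \<in> borel_measurable borel" unfolding g_def by measurable
  have gnn: "0 \<le> g x" for x using le by (auto simp: g_def indicator_def)
  have I: "((\<lambda>x. v x - u x) has_integral integral {s..t} (\<lambda>x. v x - u x)) {s..t}"
    by (intro integrable_integral integrable_continuous_interval continuous_intros continuous_on_subset[OF cu] continuous_on_subset[OF cv]) auto
  have gI: "(g has_integral integral {s..t} (\<lambda>x. v x - u x)) UNIV"
  proof -
    have "g = (\<lambda>x. if x \<in> {s..t} then v x - u x else 0)" by (auto simp: g_def indicator_def fun_eq_iff)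
    then show ?thesis using has_integral_restrict_UNIV[of "{s..t}" "\<lambda>x. v x - u x"] I by simp
  qed
  have sl: "Pair x -` ?R = (if s \<le> x \<and> x \<le> t then {u x .. v x} else {})" for x by auto
  have "emeasure lborel ?R = emeasure (lborel \<Otimes>\<^sub>M lborel) ?R" by (simp add: lborel_prod)
  also have "\<dots> = (\<integral>\<^sup>+x. emeasure lborel (Pair x -` ?R) \<partial>lborel)"
    by (rule lborel.emeasure_pair_measure_alt[OF R])
  also have "\<dots> = (\<integral>\<^sup>+x. ennreal (g x) \<partial>lborel)"
  proof (intro nn_integral_cong)
    fix x :: real
    show "emeasure lborel (Pair x -` ?R) = ennreal (g x)"
    proof (cases "s \<le> x \<and> x \<le> t")
      case True
      then show ?thesis unfolding sl g_def using le True by simp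
    next
      case False
      then show ?thesis unfolding sl g_def by auto
    qed
  qed
  also have "\<dots> = ennreal (integral {s..t} (\<lambda>x. v x - u x))"
    by (rule nn_integral_has_integral_lborel[OF _ gnn gI]) simp
  finally have E: "emeasure lborel ?R = ennreal (integral {s..t} (\<lambda>x. v x - u x))" .
  have nn: "0 \<le> integral {s..t} (\<lambda>x. v x - u x)"
    using le by (intro integral_nonneg integrable_continuous_interval continuous_intros continuous_on_subset[OF cu] continuous_on_subset[OF cv]) auto
  have "measure lebesgue ?R = measure lborel ?R" using R2 by simp
  also have "\<dots> = integral {s..t} (\<lambda>x. v x - u x)" using E nn by (simp add: measure_def)
  finally show ?thesis .
qed
lemma alg_upper:
  fixes a q H k1 u w A :: real
  assumes "a > 0" "q > 0" "H = q^2" "k1 > 0" "A = a * q^3"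
    "A \<le> H*(u+w) - k1*(u^3+w^3)/6" "u \<ge> 0" "w \<ge> 0"
  shows "a^2 * k1 \<le> 32/9"
proof -
  define r where "r = sqrt (2*H/k1)"
  have r0: "r > 0" using assms by (simp add: r_def)
  have rr: "k1 * r^2 = 2*H" using assms by (simp add: r_def)
  have phi: "H*x - k1*x^3/6 \<le> 2/3*H*r" if "x \<ge> 0" for x
  proof -
    have "2/3*H*r - (H*x - k1*x^3/6) = (k1/6)*(x-r)^2*(x+2*r)"
      using rr by (simp add: algebra_simps power2_eq_square power3_eq_cube) (simp add: field_simps)
    also have "\<dots> \<ge> 0" using assms that r0 by (intro mult_nonneg_nonneg) auto
    finally show ?thesis by simp
  qed
  have "a*q^3 \<le> 4/3*H*r"
  proof -
    have e: "H*(u+w) - k1*(u^3+w^3)/6 = (H*u - k1*u^3/6) + (H*w - k1*w^3/6)" by (simp add: algebra_simps)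
    show ?thesis using phi[OF assms(7)] phi[OF assms(8)] assms(5,6) unfolding e by linarith
  qed
  then have "q^2 * (a*q) \<le> q^2 * (4/3*r)" using assms(3) by (simp add: algebra_simps power2_eq_square power3_eq_cube)
  then have "a*q \<le> 4/3*r" using assms(2) by (simp add: mult_le_cancel_left)
  then have "(a*q)^2 \<le> (4/3*r)^2" using assms by (intro power_mono) auto
  then have "a^2*q^2 \<le> 16/9*r^2" by (simp add: power_mult_distrib power_divide)
  then have "k1*(a^2*q^2) \<le> k1*(16/9*r^2)" using assms(4) by (intro mult_left_mono) auto
  moreover have "k1*(16/9*r^2) = 32/9*q^2" using rr assms(3) by simp
  moreover have "k1*(a^2*q^2) = q^2 * (a^2 * k1)" by simp
  ultimately have "q^2 * (a^2 * k1) \<le> q^2 * (32/9)" by simp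
  then show ?thesis using assms(2) by (simp add: mult_le_cancel_left)
qed

lemma alg_lower:
  fixes a q H k1 k2 u w A :: real
  assumes "a > 0" "q > 0" "H = q^2" "k1 > 0" "k2 \<ge> k1" "3*k1 \<ge> k2" "A = a * q^3"
    "H*(u+w) - k2*(u^3+w^3)/6 \<le> A" "u \<ge> 0" "w \<ge> 0"
    "k1*u^2 \<le> 2*H" "2*H \<le> k2*u^2" "k1*w^2 \<le> 2*H" "2*H \<le> k2*w^2"
  shows "8*((3*k1-k2)/(3*k1))^2 \<le> a^2 * k2"
proof -
  define c where "c = (3*k1-k2)/(3*k1)"
  have c0: "c \<ge> 0" using assms by (simp add: c_def)
  have psi: "x*H*c \<le> H*x - k2*x^3/6" if "x \<ge> 0" "k1*x^2 \<le> 2*H" for x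
  proof -
    have "k2*x^2 \<le> k2 * (2*H/k1)" using that assms by (intro mult_left_mono) (auto simp: field_simps)
    then have "H - k2*x^2/6 \<ge> H*c" using assms by (simp add: c_def field_simps)
    then have "x*(H - k2*x^2/6) \<ge> x*(H*c)" using that by (intro mult_left_mono) auto
    then show ?thesis by (simp add: algebra_simps power3_eq_cube power2_eq_square)
  qed
  have "(u+w)*H*c \<le> a*q^3"
  proof -
    have e: "H*(u+w) - k2*(u^3+w^3)/6 = (H*u - k2*u^3/6) + (H*w - k2*w^3/6)" "(u+w)*H*c = u*H*c + w*H*c" by (simp_all add: algebra_simps)
    show ?thesis using psi[OF assms(9,11)] psi[OF assms(10,13)] assms(7,8) unfolding e by linarith
  qed
  then have "q^2 * ((u+w)*c) \<le> q^2 * (a*q)" using assms(3) by (simp add: algebra_simps power2_eq_square power3_eq_cube)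
  then have h1: "(u+w)*c \<le> a*q" using assms(2) by (simp add: mult_le_cancel_left)
  have "((u+w)*c)^2 \<le> (a*q)^2" using h1 c0 assms by (intro power_mono) auto
  have uw: "u*w \<ge> 2*H/k2"
  proof -
    have k2p: "k2 > 0" using assms by simp
    have "(2*H/k2)^2 \<le> (u*w)^2"
    proof -
      have "2*H/k2 \<le> u^2" "2*H/k2 \<le> w^2" using assms k2p by (auto simp: field_simps)
      moreover have "0 \<le> 2*H/k2" using assms k2p by simp
      ultimately have "(2*H/k2)*(2*H/k2) \<le> u^2*w^2" by (intro mult_mono) auto
      then show ?thesis by (simp add: power2_eq_square algebra_simps)
    qed
    then show ?thesis by (rule power2_le_imp_le) (use assms(9,10) in simp)
  qed
  have "(u+w)^2 \<ge> 8*H/k2"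
  proof -
    have "(u+w)^2 = (u-w)^2 + 4*(u*w)" by (simp add: power2_eq_square algebra_simps)
    moreover have "(u-w)^2 \<ge> 0" by simp
    moreover have "8*H/k2 = 4*(2*H/k2)" by simp
    ultimately show ?thesis using uw by linarith
  qed
  then have "8*H/k2 * c^2 \<le> (u+w)^2 * c^2" by (intro mult_right_mono) auto
  also have "\<dots> \<le> (a*q)^2" using \<open>((u+w)*c)^2 \<le> (a*q)^2\<close> by (simp add: power_mult_distrib)
  finally have X: "8*H/k2*c^2 \<le> a^2*q^2" by (simp add: power_mult_distrib)
  have k2p: "k2 > 0" using assms(4,5) by simp
  have "k2*(8*H/k2*c^2) \<le> k2*(a^2*q^2)" by (rule mult_left_mono[OF X]) (use k2p in simp)
  moreover have "k2*(8*H/k2*c^2) = q^2*(8*c^2)" using k2p assms(3) by (simp add: field_simps)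
  moreover have "k2*(a^2*q^2) = q^2*(a^2*k2)" by simp
  ultimately have "q^2 * (8*c^2) \<le> q^2 * (a^2*k2)" by simp
  then show ?thesis using assms(2) by (simp add: mult_le_cancel_left c_def)
qed

lemma lim_arg:
  fixes a m :: real
  assumes m: "m > 0"
    and H: "\<And>e. 0 < e \<Longrightarrow> e < m/2 \<Longrightarrow> a^2*(m-e) \<le> 32/9 \<and> 8*((3*(m-e)-(m+e))/(3*(m-e)))^2 \<le> a^2*(m+e)"
  shows "a^2 * m = 32/9"
proof -
  have ev: "eventually (\<lambda>e. 0 < e \<and> e < m/2) (at_right (0::real))"
    using m by (intro eventually_conj eventually_at_right_less) (auto simp: eventually_at_right_field intro: exI[of _ "m/2"])
  have t1: "((\<lambda>e. a^2*(m-e)) \<longlongrightarrow> a^2*(m-0)) (at_right 0)"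
    by (intro tendsto_intros)
  have t2: "((\<lambda>e. a^2*(m+e)) \<longlongrightarrow> a^2*(m+0)) (at_right 0)"
    by (intro tendsto_intros)
  have t3: "((\<lambda>e::real. 8*((3*(m-e)-(m+e))/(3*(m-e)))^2) \<longlongrightarrow> 8*((3*(m-0)-(m+0))/(3*(m-0)))^2) (at_right 0)"
    using m by (intro tendsto_intros) auto
  have "a^2*(m-0) \<le> 32/9"
    by (rule tendsto_le[OF _ tendsto_const t1]) (simp_all, use ev in \<open>rule eventually_mono\<close>, use H in auto)
  moreover have "8*((3*(m-0)-(m+0))/(3*(m-0)))^2 \<le> a^2*(m+0)"
    by (rule tendsto_le[OF _ t2 t3]) (simp_all, use ev in \<open>rule eventually_mono\<close>, use H in auto)
  moreover have "8*((3*(m-0)-(m+0))/(3*(m-0)))^2 = (32/9::real)" using m by (simp add: field_simps power2_eq_square)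
  ultimately show ?thesis by simp
qed

lemma interval_sub:
  assumes "is_interval (I::real set)" "s \<in> I" "t \<in> I"
  shows "{s..t} \<subseteq> I"
proof
  fix x assume "x \<in> {s..t}"
  then show "x \<in> I" using mem_is_interval_1_I[OF assms(1) assms(2) assms(3), of x] by simp
qed

lemma area_formula:
  fixes f f1 f2 :: "real \<Rightarrow> real"
  assumes iv: "is_interval I"
    and d0: "\<And>x. x \<in> I \<Longrightarrow> (f has_real_derivative f1 x) (at x)"
    and d1: "\<And>x. x \<in> I \<Longrightarrow> (f1 has_real_derivative f2 x) (at x)"
    and pos: "\<And>x. x \<in> I \<Longrightarrow> f2 x \<ge> 0"
    and st: "s < t" "s \<in> I" "t \<in> I"
  shows "measure lebesgue (chord_region f s t) = integral {s..t} (\<lambda>x. chord f s t x - f x)"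
proof -
  have sub: "{s..t} \<subseteq> I" using interval_sub[OF iv st(2,3)] .
  have xI: "\<And>x. x \<in> {s..t} \<Longrightarrow> x \<in> I" using sub by blast
  have xI': "\<And>x. s \<le> x \<Longrightarrow> x \<le> t \<Longrightarrow> x \<in> I" using sub by auto
  have cf: "continuous_on {s..t} f"
    by (intro continuous_at_imp_continuous_on ballI DERIV_continuous[OF d0]) (rule xI)
  define u where "u x = f (max s (min t x))" for x
  have cl: "continuous_on UNIV (\<lambda>x::real. max s (min t x))" by (intro continuous_intros)
  have im: "(\<lambda>x::real. max s (min t x)) ` UNIV \<subseteq> {s..t}" using st(1) by auto
  have cu: "continuous_on UNIV u"
    unfolding u_def by (rule continuous_on_compose2[OF cf cl im])
  have cv: "continuous_on UNIV (chord f s t)"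
    unfolding chord_def by (intro continuous_intros)
  have cvx: "convex_on {s..t} f"
    by (rule f''_ge0_imp_convex[where f'=f1 and f''=f2]) (simp_all add: d0 d1 pos xI')
  have le: "\<forall>x\<in>{s..t}. u x \<le> chord f s t x"
  proof
    fix x assume x: "x \<in> {s..t}"
    then have "u x = f x" by (auto simp: u_def max_def min_def)
    also have "\<dots> \<le> chord f s t x"
      using convex_onD_Icc'[OF cvx x] by (simp add: chord_def algebra_simps)
    finally show "u x \<le> chord f s t x" .
  qed
  have mm: "\<And>x. s \<le> x \<Longrightarrow> x \<le> t \<Longrightarrow> u x = f x" by (simp add: u_def)
  have "chord_region f s t = {(x,y). s \<le> x \<and> x \<le> t \<and> u x \<le> y \<and> y \<le> chord f s t x}"
    by (auto simp: chord_region_def mm)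
  then have "measure lebesgue (chord_region f s t) = integral {s..t} (\<lambda>x. chord f s t x - u x)"
    using region_measure[OF _ cu cv le] st by simp
  also have "\<dots> = integral {s..t} (\<lambda>x. chord f s t x - f x)"
    by (intro integral_cong) (auto simp: mm)
  finally show ?thesis .
qed

lemma ftc_real:
  fixes F F' :: "real \<Rightarrow> real"
  assumes "a \<le> b" "\<And>x. (F has_real_derivative F' x) (at x)"
  shows "(F' has_integral (F b - F a)) {a..b}"
  by (rule fundamental_theorem_of_calculus[OF assms(1)])
     (use assms(2) in \<open>auto simp: has_real_derivative_iff_has_vector_derivative[symmetric] intro: has_field_derivative_at_within\<close>)

lemma powr32: "0 \<le> (x::real) \<Longrightarrow> x powr (3/2) = x * sqrt x"
proof -
  assume x: "0 \<le> x"
  have e: "(3/2::real) = 1 + 1/2" by simp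
  have "x powr (3/2) = x powr 1 * x powr (1/2)" unfolding e by (rule powr_add)
  also have "\<dots> = x * sqrt x" using x by (cases "x = 0") (simp_all add: powr_half_sqrt)
  finally show ?thesis .
qed

lemma fwd:
  fixes f f1 f2 :: "real \<Rightarrow> real"
  assumes op: "open I" and iv: "is_interval I" and ne: "I \<noteq> {}"
    and d0: "\<And>x. x \<in> I \<Longrightarrow> (f has_real_derivative f1 x) (at x)"
    and d1: "\<And>x. x \<in> I \<Longrightarrow> (f1 has_real_derivative f2 x) (at x)"
    and pos: "\<And>x. x \<in> I \<Longrightarrow> f2 x > 0"
    and quad: "\<forall>x\<in>I. f x = c2 * x^2 + c1 * x + c0"
  shows "condition_A f f1 I"
proof -
  have f1x: "f1 x = 2*c2*x + c1" if x: "x \<in> I" for x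
  proof -
    have "((\<lambda>x. c2 * x^2 + c1 * x + c0) has_real_derivative 2*c2*x + c1) (at x)"
      by (auto intro!: derivative_eq_intros)
    then have "(f has_real_derivative 2*c2*x + c1) (at x)"
      by (rule has_field_derivative_transform_within_open[OF _ op x]) (use quad in simp)
    then show ?thesis using d0[OF x] by (rule DERIV_unique[symmetric])
  qed
  have f2x: "f2 x = 2*c2" if x: "x \<in> I" for x
  proof -
    have "((\<lambda>x. 2*c2*x + c1) has_real_derivative 2*c2) (at x)"
      by (auto intro!: derivative_eq_intros)
    then have "(f1 has_real_derivative 2*c2) (at x)"
      by (rule has_field_derivative_transform_within_open[OF _ op x]) (use f1x in simp)
    then show ?thesis using d1[OF x] by (rule DERIV_unique[symmetric])
  qed
  obtain x0 where "x0 \<in> I" using ne by blast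
  then have c2: "c2 > 0" using pos[of x0] f2x[of x0] by simp
  define a where "a = 4 / (3 * sqrt c2)"
  have a0: "a > 0" using c2 by (simp add: a_def)
  show ?thesis unfolding condition_A_def
  proof (intro exI[of _ a] conjI a0 ballI impI)
    fix p s t assume pI: "p \<in> I" and sI: "s \<in> I" and tI: "t \<in> I"
      and H: "s < t \<and> (f t - f s) / (t - s) = f1 p \<and> s \<le> p \<and> p \<le> t"
    then have st: "s < t" and sl: "(f t - f s) / (t - s) = f1 p" and sp: "s \<le> p" "p \<le> t" by auto
    have "f t - f s = (t - s) * (c2*(t+s) + c1)" using quad sI tI by (simp add: algebra_simps power2_eq_square)
    then have sl2: "(f t - f s) / (t - s) = c2*(t+s) + c1" using st by simp
    then have "c2*(t+s) = 2*c2*p" using sl f1x[OF pI] by linarith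
    then have "c2*(t+s-2*p) = 0" by (simp add: algebra_simps)
    then have "t+s = 2*p" using c2 by simp
    then have pm: "p = (s+t)/2" by simp
    have sub: "{s..t} \<subseteq> I" by (rule interval_sub[OF iv sI tI])
    have area: "measure lebesgue (chord_region f s t) = integral {s..t} (\<lambda>x. chord f s t x - f x)"
      by (rule area_formula[OF iv d0 d1 _ st sI tI]) (use pos in \<open>auto intro: less_imp_le\<close>)
    have "integral {s..t} (\<lambda>x. chord f s t x - f x) = integral {s..t} (\<lambda>x. c2*(x-s)*(t-x))"
    proof (rule integral_cong)
      fix x assume "x \<in> {s..t}"
      then have "x \<in> I" using sub by blast
      then show "chord f s t x - f x = c2*(x-s)*(t-x)"
        unfolding chord_def sl2 using quad sI by (simp add: algebra_simps power2_eq_square)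
    qed
    also have "\<dots> = c2*(t-s)^3/6"
    proof -
      define F where "F x = c2*(-(x^3)/3 + (s+t)*x^2/2 - s*t*x)" for x
      have "((\<lambda>x. c2*(x-s)*(t-x)) has_integral (F t - F s)) {s..t}"
        by (rule ftc_real) (use st in \<open>auto simp: F_def intro!: derivative_eq_intros simp: algebra_simps power2_eq_square\<close>)
      moreover have "F t - F s = c2*(t-s)^3/6" unfolding F_def by (simp add: field_simps power2_eq_square power3_eq_cube)
      ultimately show ?thesis by (simp add: integral_unique)
    qed
    finally have A: "measure lebesgue (chord_region f s t) = c2*(t-s)^3/6" using area by simp
    have hv: "chord f s t p - f p = c2*(t-s)^2/4"
    proof -
      have fp: "f p = c2 * p^2 + c1 * p + c0" and fs: "f s = c2 * s^2 + c1 * s + c0" using quad pI sI by auto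
      have "chord f s t p - f p = f s + (c2*(t+s)+c1)*(p-s) - f p" unfolding chord_def sl2 by simp
      also have "\<dots> = c2*(t-s)^2/4" unfolding fp fs unfolding pm by (simp add: field_simps power2_eq_square)
      finally show ?thesis .
    qed
    have "a * \<bar>chord f s t p - f p\<bar> powr (3/2) = a * ((c2*(t-s)^2/4) * sqrt (c2*(t-s)^2/4))"
      using c2 by (simp add: hv powr32)
    also have "sqrt (c2*(t-s)^2/4) = sqrt c2 * (t-s) / 2"
      using st c2 by (simp add: real_sqrt_mult real_sqrt_divide)
    also have "a * ((c2*(t-s)^2/4) * (sqrt c2 * (t-s) / 2)) = c2*(t-s)^3/6"
      using c2 by (simp add: a_def field_simps power2_eq_square power3_eq_cube)
    finally show "measure lebesgue (chord_region f s t) = a * \<bar>chord f s t p - f p\<bar> powr (3/2)"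
      using A by simp
  qed
qed

lemma taylor2:
  fixes f f1 f2 :: "real \<Rightarrow> real"
  assumes d: "\<And>y. lo \<le> y \<Longrightarrow> y \<le> hi \<Longrightarrow> (f has_real_derivative f1 y) (at y) \<and> (f1 has_real_derivative f2 y) (at y) \<and> k1 \<le> f2 y \<and> f2 y \<le> k2"
    and p: "lo \<le> p" "p \<le> hi" and x: "lo \<le> x" "x \<le> hi"
  shows "k1*(x-p)^2/2 \<le> f x - f p - f1 p*(x-p) \<and> f x - f p - f1 p*(x-p) \<le> k2*(x-p)^2/2"
proof (cases "x = p")
  case True then show ?thesis by simp
next
  case False
  define diff where "diff m = (if m = 0 then f else if m = 1 then f1 else f2)" for m :: nat
  have "\<exists>t. (if x < p then x < t \<and> t < p else p < t \<and> t < x) \<and>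
    f x = (\<Sum>m<2. (diff m p / fact m) * (x - p)^m) + (diff 2 t / fact 2) * (x - p)^2"
  proof (rule Taylor[of 2 diff f lo hi p x])
    show "\<forall>m t. m < 2 \<and> lo \<le> t \<and> t \<le> hi \<longrightarrow> (diff m has_real_derivative diff (Suc m) t) (at t)"
    proof (intro allI impI)
      fix m :: nat and t :: real assume "m < 2 \<and> lo \<le> t \<and> t \<le> hi"
      then have "m = 0 \<or> m = 1" "lo \<le> t" "t \<le> hi" by auto
      then show "(diff m has_real_derivative diff (Suc m) t) (at t)"
        using d[of t] by (auto simp: diff_def)
    qed
  qed (use p x False in \<open>auto simp: diff_def\<close>)
  then obtain \<xi> where xi: "(if x < p then x < \<xi> \<and> \<xi> < p else p < \<xi> \<and> \<xi> < x)"
    and eq: "f x = (\<Sum>m<2. (diff m p / fact m) * (x - p)^m) + (diff 2 \<xi> / fact 2) * (x - p)^2"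
    by blast
  have xib: "lo \<le> \<xi>" "\<xi> \<le> hi" using xi p x by (auto split: if_splits)
  have eq2: "f x - f p - f1 p*(x-p) = f2 \<xi> * (x-p)^2 / 2"
    using eq by (simp add: diff_def numeral_2_eq_2)
  have "k1*(x-p)^2/2 \<le> f2 \<xi> * (x-p)^2 / 2" "f2 \<xi> * (x-p)^2 / 2 \<le> k2*(x-p)^2/2"
    using d[OF xib] by (auto intro!: divide_right_mono mult_right_mono)
  then show ?thesis using eq2 by simp
qed

lemma poly_int:
  fixes H k p s t :: real
  assumes "s \<le> t"
  shows "integral {s..t} (\<lambda>x. H - k*(x-p)^2/2) = H*(t-s) - k*((t-p)^3 + (p-s)^3)/6"
proof -
  define F where "F x = H*x - k*(x-p)^3/6" for x
  have "((\<lambda>x. H - k*(x-p)^2/2) has_integral (F t - F s)) {s..t}"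
    by (rule ftc_real[OF assms]) (auto simp: F_def intro!: derivative_eq_intros simp: power2_eq_square)
  moreover have "F t - F s = H*(t-s) - k*((t-p)^3 + (p-s)^3)/6"
    unfolding F_def by (simp add: field_simps power3_eq_cube)
  ultimately show ?thesis by (simp add: integral_unique)
qed

lemma rev_pt:
  fixes f f1 f2 f3 :: "real \<Rightarrow> real"
  assumes op: "open I" and iv: "is_interval I"
    and d0: "\<And>x. x \<in> I \<Longrightarrow> (f has_real_derivative f1 x) (at x)"
    and d1: "\<And>x. x \<in> I \<Longrightarrow> (f1 has_real_derivative f2 x) (at x)"
    and d2: "\<And>x. x \<in> I \<Longrightarrow> (f2 has_real_derivative f3 x) (at x)"
    and pos: "\<And>x. x \<in> I \<Longrightarrow> f2 x > 0"
    and a0: "a > 0"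
    and cA: "\<forall>p\<in>I. \<forall>s\<in>I. \<forall>t\<in>I.
       s < t \<and> (f t - f s) / (t - s) = f1 p \<and> s \<le> p \<and> p \<le> t \<longrightarrow>
       measure lebesgue (chord_region f s t) = a * \<bar>chord f s t p - f p\<bar> powr (3/2)"
    and pI: "p \<in> I"
  shows "a^2 * f2 p = 32/9"
proof -
  define m where "m = f2 p"
  have m0: "m > 0" using pos[OF pI] by (simp add: m_def)
  show ?thesis unfolding m_def[symmetric]
  proof (rule lim_arg[OF m0])
    fix e :: real assume e0: "0 < e" and em: "e < m/2"
    define k1 where "k1 = m - e"
    define k2 where "k2 = m + e"
    have k1p: "k1 > 0" and k12: "k1 \<le> k2" and k3: "3*k1 \<ge> k2" using e0 em by (auto simp: k1_def k2_def)
    have "isCont f2 p" using d2[OF pI] by (rule DERIV_isCont)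
    then obtain d0' where d0p: "d0' > 0" and d0c: "\<And>x. dist x p < d0' \<Longrightarrow> dist (f2 x) (f2 p) < e"
      using e0 unfolding continuous_at_eps_delta by blast
    obtain d1' where d1p: "d1' > 0" and d1b: "ball p d1' \<subseteq> I" using openE[OF op pI] by blast
    define \<delta> where "\<delta> = min d0' d1' / 2"
    have dp: "\<delta> > 0" using d0p d1p by (simp add: \<delta>_def)
    have JI: "y \<in> I" and Jb: "k1 \<le> f2 y \<and> f2 y \<le> k2" if "p - \<delta> \<le> y" "y \<le> p + \<delta>" for y
    proof -
      have "dist y p < d0'" "dist y p < d1'" using that d0p d1p by (auto simp: \<delta>_def dist_real_def)
      then show "y \<in> I" using d1b by (auto simp: dist_commute)
      have "\<bar>f2 y - m\<bar> < e" using d0c[OF \<open>dist y p < d0'\<close>] by (simp add: dist_real_def m_def)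
      then show "k1 \<le> f2 y \<and> f2 y \<le> k2" by (auto simp: k1_def k2_def)
    qed
    define g where "g x = f x - f p - f1 p*(x-p)" for x
    have gb: "k1*(x-p)^2/2 \<le> g x \<and> g x \<le> k2*(x-p)^2/2" if "p - \<delta> \<le> x" "x \<le> p + \<delta>" for x
      unfolding g_def
      by (rule taylor2[where lo="p-\<delta>" and hi="p+\<delta>"]) (use that dp JI Jb d0 d1 in auto)
    have gp: "g p = 0" by (simp add: g_def)
    define \<delta>' where "\<delta>' = \<delta>*k1/k2"
    have d'p: "\<delta>' > 0" and d'le: "\<delta>' \<le> \<delta>" using dp k1p k12 by (auto simp: \<delta>'_def field_simps)
    define s where "s = p - \<delta>'"
    define H where "H = g s"
    have sbd: "p - \<delta> \<le> s" "s \<le> p + \<delta>" "s < p" using d'le d'p dp by (auto simp: s_def)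
    have gs: "k1*(s-p)^2/2 \<le> H \<and> H \<le> k2*(s-p)^2/2" using gb[OF sbd(1,2)] by (simp add: H_def)
    have H0: "H > 0" using gs k1p sbd(3) by (smt (verit) divide_pos_pos mult_pos_pos zero_less_power2)
    have "H \<le> g (p+\<delta>)"
    proof -
      have "H \<le> k2*\<delta>'^2/2" using gs by (simp add: s_def)
      also have "k2*\<delta>'^2 = k1*(k1/k2)*\<delta>^2" using k1p k12 by (simp add: \<delta>'_def field_simps power2_eq_square)
      also have "k1*(k1/k2)*\<delta>^2 \<le> k1*\<delta>^2"
        using k1p k12 by (intro mult_right_mono mult_left_mono) (auto simp: field_simps)
      also have "k1*\<delta>^2/2 \<le> g (p+\<delta>)" using gb[of "p+\<delta>"] dp by simp
      finally show ?thesis by simp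
    qed
    moreover have "g p \<le> H" using H0 gp by simp
    moreover have cg: "continuous_on {p..p+\<delta>} g"
    proof -
      have "continuous_on {p..p+\<delta>} f"
        by (intro continuous_at_imp_continuous_on ballI DERIV_continuous[OF d0]) (use JI dp in auto)
      then show ?thesis unfolding g_def by (intro continuous_intros)
    qed
    ultimately obtain t where pt: "p \<le> t" "t \<le> p+\<delta>" and gt: "g t = H"
      using IVT'[of g p H "p+\<delta>"] dp by auto
    have tp: "p < t" using pt gt gp H0 by (cases "t = p") auto
    have tbd: "p - \<delta> \<le> t" "t \<le> p + \<delta>" using pt dp by auto
    have sI: "s \<in> I" and tI: "t \<in> I" using JI sbd tbd by auto
    have st: "s < t" using sbd tp by simp
    have "f t - f s = f1 p * (t - s)" using gt unfolding H_def g_def by (simp add: algebra_simps)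
    then have sl: "(f t - f s) / (t - s) = f1 p" using st by simp
    have hv: "chord f s t p - f p = H" unfolding chord_def sl H_def g_def by (simp add: algebra_simps)
    have "measure lebesgue (chord_region f s t) = a * \<bar>chord f s t p - f p\<bar> powr (3/2)"
      using cA pI sI tI st sl sbd tp by auto
    also have "\<dots> = a * (H * sqrt H)" using H0 by (simp add: hv powr32)
    finally have A1: "measure lebesgue (chord_region f s t) = a * (H * sqrt H)" .
    have area: "measure lebesgue (chord_region f s t) = integral {s..t} (\<lambda>x. chord f s t x - f x)"
      by (rule area_formula[OF iv d0 d1 _ st sI tI]) (use pos in \<open>auto intro: less_imp_le\<close>)
    have "integral {s..t} (\<lambda>x. chord f s t x - f x) = integral {s..t} (\<lambda>x. H - g x)"
      by (rule integral_cong) (simp add: chord_def sl H_def g_def algebra_simps)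
    then have A2: "measure lebesgue (chord_region f s t) = integral {s..t} (\<lambda>x. H - g x)" using area by simp
    have cg2: "continuous_on {s..t} (\<lambda>x. H - g x)"
    proof -
      have "continuous_on {s..t} f"
        by (intro continuous_at_imp_continuous_on ballI DERIV_continuous[OF d0]) (use JI sbd tbd in auto)
      then show ?thesis unfolding g_def by (intro continuous_intros)
    qed
    have ig: "(\<lambda>x. H - g x) integrable_on {s..t}" using cg2 by (rule integrable_continuous_interval)
    have ip: "(\<lambda>x. H - k*(x-p)^2/2) integrable_on {s..t}" for k
      by (intro integrable_continuous_interval continuous_intros) auto
    have up: "integral {s..t} (\<lambda>x. H - g x) \<le> H*(t-s) - k1*((t-p)^3 + (p-s)^3)/6"
    proof -
      have "integral {s..t} (\<lambda>x. H - g x) \<le> integral {s..t} (\<lambda>x. H - k1*(x-p)^2/2)"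
        by (rule integral_le[OF ig ip]) (use gb sbd tbd in \<open>auto\<close>)
      then show ?thesis using poly_int[of s t H k1 p] st by simp
    qed
    have lo: "H*(t-s) - k2*((t-p)^3 + (p-s)^3)/6 \<le> integral {s..t} (\<lambda>x. H - g x)"
    proof -
      have "integral {s..t} (\<lambda>x. H - k2*(x-p)^2/2) \<le> integral {s..t} (\<lambda>x. H - g x)"
        by (rule integral_le[OF ip ig]) (use gb sbd tbd in \<open>auto\<close>)
      then show ?thesis using poly_int[of s t H k2 p] st by simp
    qed
    define q where "q = sqrt H"
    have q0: "q > 0" and Hq: "H = q^2" using H0 by (auto simp: q_def)
    have Aq: "measure lebesgue (chord_region f s t) = a * q^3"
    proof -
      have "H * sqrt H = q^3" unfolding q_def using H0 by (simp add: power3_eq_cube)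
      then show ?thesis using A1 by simp
    qed
    have e1: "H*(t-s) = H*((p-s)+(t-p))" by simp
    have gt': "k1*(t-p)^2/2 \<le> H \<and> H \<le> k2*(t-p)^2/2" using gb[OF tbd] gt by simp
    have gs': "k1*(p-s)^2/2 \<le> H \<and> H \<le> k2*(p-s)^2/2" using gs by (simp add: power2_commute)
    have U: "a^2 * k1 \<le> 32/9"
      by (rule alg_upper[OF a0 q0 Hq k1p Aq, of "p-s" "t-p"]) (use A2 up sbd tp in \<open>auto simp: algebra_simps\<close>)
    have L: "8*((3*k1-k2)/(3*k1))^2 \<le> a^2 * k2"
      by (rule alg_lower[OF a0 q0 Hq k1p k12 k3 Aq, of "p-s" "t-p"]) (use A2 lo sbd tp gt' gs' in \<open>auto simp: algebra_simps\<close>)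
    show "a^2*(m-e) \<le> 32/9 \<and> 8*((3*(m-e)-(m+e))/(3*(m-e)))^2 \<le> a^2*(m+e)"
      using U L by (simp add: k1_def k2_def)
  qed
qed

theorem theorem1:
  fixes f f1 f2 f3 :: "real \<Rightarrow> real" and I :: "real set"
  assumes "is_interval I" and "open I" and "I \<noteq> {}"
    and "C3_with_derivs f f1 f2 f3 I"
    and "\<forall>x\<in>I. f2 x > 0"
  shows "(\<exists>c2 c1 c0. c2 \<noteq> 0 \<and> (\<forall>x\<in>I. f x = c2 * x^2 + c1 * x + c0))
         \<longleftrightarrow> condition_A f f1 I"
proof -
  note iv = assms(1) and op = assms(2) and ne = assms(3)
  have d0: "\<And>x. x \<in> I \<Longrightarrow> (f has_real_derivative f1 x) (at x)"
    and d1: "\<And>x. x \<in> I \<Longrightarrow> (f1 has_real_derivative f2 x) (at x)"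
    and d2: "\<And>x. x \<in> I \<Longrightarrow> (f2 has_real_derivative f3 x) (at x)"
    using assms(4) by (auto simp: C3_with_derivs_def)
  have pos: "\<And>x. x \<in> I \<Longrightarrow> f2 x > 0" using assms(5) by auto
  have cvI: "convex I" using iv by (rule is_interval_convex)
  show ?thesis
  proof
    assume "\<exists>c2 c1 c0. c2 \<noteq> 0 \<and> (\<forall>x\<in>I. f x = c2 * x^2 + c1 * x + c0)"
    then obtain c2 c1 c0 where q: "\<forall>x\<in>I. f x = c2 * x^2 + c1 * x + c0" by blast
    show "condition_A f f1 I" by (rule fwd[OF op iv ne d0 d1 pos q])
  next
    assume "condition_A f f1 I"
    then obtain a where a0: "a > 0" and cA: "\<forall>p\<in>I. \<forall>s\<in>I. \<forall>t\<in>I.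
       s < t \<and> (f t - f s) / (t - s) = f1 p \<and> s \<le> p \<and> p \<le> t \<longrightarrow>
       measure lebesgue (chord_region f s t) = a * \<bar>chord f s t p - f p\<bar> powr (3/2)"
      unfolding condition_A_def by blast
    define K where "K = 32/(9*a^2)"
    have f2K: "f2 x = K" if "x \<in> I" for x
    proof -
      have "a^2 * f2 x = 32/9" by (rule rev_pt[OF op iv d0 d1 d2 pos a0 cA that])
      then show ?thesis using a0 by (simp add: K_def field_simps)
    qed
    have "\<exists>C. \<forall>x\<in>I. f1 x - K*x = C"
    proof (rule has_field_derivative_zero_constant[OF cvI])
      fix x assume x: "x \<in> I"
      have "((\<lambda>x. f1 x - K*x) has_real_derivative f2 x - K) (at x)"
        using d1[OF x] by (auto intro!: derivative_eq_intros)
      then show "((\<lambda>x. f1 x - K*x) has_real_derivative 0) (at x within I)"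
        using f2K[OF x] by (auto intro: has_field_derivative_at_within)
    qed
    then obtain C1 where C1: "\<And>x. x \<in> I \<Longrightarrow> f1 x = K*x + C1" by (metis add.commute diff_eq_eq)
    have "\<exists>C. \<forall>x\<in>I. f x - (K/2*x^2 + C1*x) = C"
    proof (rule has_field_derivative_zero_constant[OF cvI])
      fix x assume x: "x \<in> I"
      have "((\<lambda>x. f x - (K/2*x^2 + C1*x)) has_real_derivative f1 x - (K/2*(2*x) + C1)) (at x)"
        using d0[OF x] by (auto intro!: derivative_eq_intros)
      then show "((\<lambda>x. f x - (K/2*x^2 + C1*x)) has_real_derivative 0) (at x within I)"
        using C1[OF x] by (auto intro: has_field_derivative_at_within)
    qed
    then obtain C0 where C0: "\<And>x. x \<in> I \<Longrightarrow> f x - (K/2*x^2 + C1*x) = C0" by blast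
    have "K/2 \<noteq> 0" using a0 by (simp add: K_def)
    moreover have "\<forall>x\<in>I. f x = K/2 * x^2 + C1 * x + C0" using C0 by (auto simp: algebra_simps)
    ultimately show "\<exists>c2 c1 c0. c2 \<noteq> 0 \<and> (\<forall>x\<in>I. f x = c2 * x^2 + c1 * x + c0)" by blast
  qed
qed

end
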